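(* For every integer $k\geq1$, the 2-group $\mathbb{S}ym(\mathsf D_{8k})$ is not split, i.e. the dihedral group $\mathsf D_{8k}$ is not permutationally split.
   Context: $\mathsf D_n=\langle r,s\mid r^n=s^2=e,\ sr=r^{-1}s\rangle$ is the dihedral group of order $2n$, regarded as a one-object groupoid. For a groupoid $\mathcal K$, $\mathbb{S}ym(\mathcal K)$ is the 2-group (monoidal groupoid with weakly invertible objects) whose objects are self-equivalences of $\mathcal K$, morphisms natural isomorphisms, tensor product composition. A 2-group is split if it is equivalent, via a monoidal functor admitting a pseudo-inverse up to monoidal natural isomorphism, to an elementary 2-group $\mathsf A[1]\rtimes\mathsf G[0]$ for some group $\mathsf G$ and left $\mathsf G$-module $\mathsf A$: the strict 2-group with objects the elements of $\mathsf G$, morphisms $(a,g):g\to g$ ($a\in\mathsf A$), composition $(a',g)\circ(a,g)=(a'+a,g)$, tensor $g\otimes g'=gg'$, $(a,g)\otimes(a',g')=(a+g\lhd a',gg')$, trivial associator and unitors. A group $\mathsf G$ is permutationally split if $\mathbb{S}ym(\mathsf G)$ is split. *)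

theory Defs
  imports "HOL-Algebra.Group" "HOL-Library.FuncSet"
begin

text \<open>Morphisms are elements of a set with domain/codomain maps.
  mg_cmp T g f is the composite g after f (defined when dom g = cod f).
  mg_asc x y z : (x*y)*z -> x*(y*z), mg_lun x : I*x -> x, mg_run x : x*I -> x.\<close>

record ('o, 'm) mgpd =
  mg_obj :: "'o set"
  mg_mor :: "'m set"
  mg_dom :: "'m \<Rightarrow> 'o"
  mg_cod :: "'m \<Rightarrow> 'o"
  mg_cmp :: "'m \<Rightarrow> 'm \<Rightarrow> 'm"
  mg_idn :: "'o \<Rightarrow> 'm"
  mg_tno :: "'o \<Rightarrow> 'o \<Rightarrow> 'o"
  mg_tnm :: "'m \<Rightarrow> 'm \<Rightarrow> 'm"
  mg_unt :: "'o"
  mg_asc :: "'o \<Rightarrow> 'o \<Rightarrow> 'o \<Rightarrow> 'm"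
  mg_lun :: "'o \<Rightarrow> 'm"
  mg_run :: "'o \<Rightarrow> 'm"

definition mg_arr :: "('o,'m) mgpd \<Rightarrow> 'm \<Rightarrow> 'o \<Rightarrow> 'o \<Rightarrow> bool" where
  "mg_arr T f a b \<longleftrightarrow> f \<in> mg_mor T \<and> mg_dom T f = a \<and> mg_cod T f = b"

definition mg_iso :: "('o,'m) mgpd \<Rightarrow> 'm \<Rightarrow> bool" where
  "mg_iso T f \<longleftrightarrow> f \<in> mg_mor T \<and>
     (\<exists>g\<in>mg_mor T. mg_dom T g = mg_cod T f \<and> mg_cod T g = mg_dom T f \<and>
        mg_cmp T g f = mg_idn T (mg_dom T f) \<and> mg_cmp T f g = mg_idn T (mg_cod T f))"

definition mg_functor ::
  "('o,'m) mgpd \<Rightarrow> ('p,'n) mgpd \<Rightarrow> ('o \<Rightarrow> 'p) \<Rightarrow> ('m \<Rightarrow> 'n) \<Rightarrow> bool" where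
  "mg_functor S T Fo Fm \<longleftrightarrow>
     Fo \<in> mg_obj S \<rightarrow> mg_obj T \<and>
     (\<forall>f\<in>mg_mor S. mg_arr T (Fm f) (Fo (mg_dom S f)) (Fo (mg_cod S f))) \<and>
     (\<forall>a\<in>mg_obj S. Fm (mg_idn S a) = mg_idn T (Fo a)) \<and>
     (\<forall>f\<in>mg_mor S. \<forall>g\<in>mg_mor S. mg_dom S g = mg_cod S f \<longrightarrow>
        Fm (mg_cmp S g f) = mg_cmp T (Fm g) (Fm f))"

definition monoidal_functor ::
  "('o,'m) mgpd \<Rightarrow> ('p,'n) mgpd \<Rightarrow> ('o \<Rightarrow> 'p) \<Rightarrow> ('m \<Rightarrow> 'n)
   \<Rightarrow> ('o \<Rightarrow> 'o \<Rightarrow> 'n) \<Rightarrow> 'n \<Rightarrow> bool" where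
  "monoidal_functor S T Fo Fm mu eps \<longleftrightarrow>
     mg_functor S T Fo Fm \<and>
     (\<forall>x\<in>mg_obj S. \<forall>y\<in>mg_obj S.
        mg_arr T (mu x y) (mg_tno T (Fo x) (Fo y)) (Fo (mg_tno S x y)) \<and> mg_iso T (mu x y)) \<and>
     mg_arr T eps (mg_unt T) (Fo (mg_unt S)) \<and> mg_iso T eps \<and>
     (\<forall>f\<in>mg_mor S. \<forall>g\<in>mg_mor S.
        mg_cmp T (mu (mg_cod S f) (mg_cod S g)) (mg_tnm T (Fm f) (Fm g)) =
        mg_cmp T (Fm (mg_tnm S f g)) (mu (mg_dom S f) (mg_dom S g))) \<and>
     (\<forall>x\<in>mg_obj S. \<forall>y\<in>mg_obj S. \<forall>z\<in>mg_obj S.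
        mg_cmp T (Fm (mg_asc S x y z))
          (mg_cmp T (mu (mg_tno S x y) z) (mg_tnm T (mu x y) (mg_idn T (Fo z)))) =
        mg_cmp T (mu x (mg_tno S y z))
          (mg_cmp T (mg_tnm T (mg_idn T (Fo x)) (mu y z)) (mg_asc T (Fo x) (Fo y) (Fo z)))) \<and>
     (\<forall>x\<in>mg_obj S.
        mg_cmp T (Fm (mg_lun S x)) (mg_cmp T (mu (mg_unt S) x) (mg_tnm T eps (mg_idn T (Fo x))))
          = mg_lun T (Fo x)) \<and>
     (\<forall>x\<in>mg_obj S.
        mg_cmp T (Fm (mg_run S x)) (mg_cmp T (mu x (mg_unt S)) (mg_tnm T (mg_idn T (Fo x)) eps))
          = mg_run T (Fo x))"

definition monoidal_nat_iso ::
  "('o,'m) mgpd \<Rightarrow> ('p,'n) mgpd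
   \<Rightarrow> ('o \<Rightarrow> 'p) \<Rightarrow> ('m \<Rightarrow> 'n) \<Rightarrow> ('o \<Rightarrow> 'o \<Rightarrow> 'n) \<Rightarrow> 'n
   \<Rightarrow> ('o \<Rightarrow> 'p) \<Rightarrow> ('m \<Rightarrow> 'n) \<Rightarrow> ('o \<Rightarrow> 'o \<Rightarrow> 'n) \<Rightarrow> 'n
   \<Rightarrow> ('o \<Rightarrow> 'n) \<Rightarrow> bool" where
  "monoidal_nat_iso S T Fo Fm muF epsF Go Gm muG epsG \<theta> \<longleftrightarrow>
     (\<forall>x\<in>mg_obj S. mg_arr T (\<theta> x) (Fo x) (Go x) \<and> mg_iso T (\<theta> x)) \<and>
     (\<forall>f\<in>mg_mor S. mg_cmp T (\<theta> (mg_cod S f)) (Fm f) = mg_cmp T (Gm f) (\<theta> (mg_dom S f))) \<and>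
     (\<forall>x\<in>mg_obj S. \<forall>y\<in>mg_obj S.
        mg_cmp T (\<theta> (mg_tno S x y)) (muF x y) = mg_cmp T (muG x y) (mg_tnm T (\<theta> x) (\<theta> y))) \<and>
     mg_cmp T (\<theta> (mg_unt S)) epsF = epsG"

definition mg_equivalent :: "('o,'m) mgpd \<Rightarrow> ('p,'n) mgpd \<Rightarrow> bool" where
  "mg_equivalent S T \<longleftrightarrow>
     (\<exists>Fo Fm mu eps Go Gm nu eta \<theta> \<theta>'.
        monoidal_functor S T Fo Fm mu eps \<and>
        monoidal_functor T S Go Gm nu eta \<and>
        monoidal_nat_iso S S
          (Go \<circ> Fo) (Gm \<circ> Fm) (\<lambda>x y. mg_cmp S (Gm (mu x y)) (nu (Fo x) (Fo y))) (mg_cmp S (Gm eps) eta)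
          id id (\<lambda>x y. mg_idn S (mg_tno S x y)) (mg_idn S (mg_unt S)) \<theta> \<and>
        monoidal_nat_iso T T
          (Fo \<circ> Go) (Fm \<circ> Gm) (\<lambda>x y. mg_cmp T (Fm (nu x y)) (mu (Go x) (Go y))) (mg_cmp T (Fm eta) eps)
          id id (\<lambda>x y. mg_idn T (mg_tno T x y)) (mg_idn T (mg_unt T)) \<theta>')"

definition left_module :: "'h monoid \<Rightarrow> 'a monoid \<Rightarrow> ('h \<Rightarrow> 'a \<Rightarrow> 'a) \<Rightarrow> bool" where
  "left_module H A act \<longleftrightarrow> group H \<and> comm_group A \<and>
     (\<forall>g\<in>carrier H. act g \<in> hom A A) \<and>
     (\<forall>a\<in>carrier A. act \<one>\<^bsub>H\<^esub> a = a) \<and>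
     (\<forall>g\<in>carrier H. \<forall>h\<in>carrier H. \<forall>a\<in>carrier A. act (g \<otimes>\<^bsub>H\<^esub> h) a = act g (act h a))"

definition elementary :: "'h monoid \<Rightarrow> 'a monoid \<Rightarrow> ('h \<Rightarrow> 'a \<Rightarrow> 'a) \<Rightarrow> ('h, 'a \<times> 'h) mgpd" where
  "elementary H A act =
    \<lparr> mg_obj = carrier H,
      mg_mor = carrier A \<times> carrier H,
      mg_dom = snd, mg_cod = snd,
      mg_cmp = (\<lambda>m' m. (fst m' \<otimes>\<^bsub>A\<^esub> fst m, snd m)),
      mg_idn = (\<lambda>g. (\<one>\<^bsub>A\<^esub>, g)),
      mg_tno = (\<lambda>g g'. g \<otimes>\<^bsub>H\<^esub> g'),
      mg_tnm = (\<lambda>m m'. (fst m \<otimes>\<^bsub>A\<^esub> act (snd m) (fst m'), snd m \<otimes>\<^bsub>H\<^esub> snd m')),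
      mg_unt = \<one>\<^bsub>H\<^esub>,
      mg_asc = (\<lambda>x y z. (\<one>\<^bsub>A\<^esub>, x \<otimes>\<^bsub>H\<^esub> y \<otimes>\<^bsub>H\<^esub> z)),
      mg_lun = (\<lambda>x. (\<one>\<^bsub>A\<^esub>, x)),
      mg_run = (\<lambda>x. (\<one>\<^bsub>A\<^esub>, x)) \<rparr>"

definition split_2group :: "('o,'m) mgpd \<Rightarrow> 'h monoid \<Rightarrow> 'a monoid \<Rightarrow> ('h \<Rightarrow> 'a \<Rightarrow> 'a) \<Rightarrow> bool" where
  "split_2group T H A act \<longleftrightarrow> left_module H A act \<and> mg_equivalent (elementary H A act) T"

text \<open>Self-equivalences of the one-object groupoid G are exactly the group automorphisms
  (stored extensionally on the carrier). A natural isomorphism phi => psi is an element g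
  with g * phi x = psi x * g (composition in G is the group product). Morphisms are stored
  as triples (source, target, component). Tensor = composition of functors; the horizontal
  composite of g : phi => phi' and g' : psi => psi' has component g * phi g'.\<close>

definition Sym :: "'g monoid \<Rightarrow> ('g \<Rightarrow> 'g, ('g \<Rightarrow> 'g) \<times> ('g \<Rightarrow> 'g) \<times> 'g) mgpd" where
  "Sym G =
    (let Ob = {\<phi>. \<phi> \<in> iso G G \<and> \<phi> \<in> extensional (carrier G)} in
    \<lparr> mg_obj = Ob,
      mg_mor = {(\<phi>, \<psi>, g). \<phi> \<in> Ob \<and> \<psi> \<in> Ob \<and> g \<in> carrier G \<and>
                   (\<forall>x\<in>carrier G. g \<otimes>\<^bsub>G\<^esub> \<phi> x = \<psi> x \<otimes>\<^bsub>G\<^esub> g)},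
      mg_dom = fst, mg_cod = (\<lambda>m. fst (snd m)),
      mg_cmp = (\<lambda>m' m. (fst m, fst (snd m'), snd (snd m') \<otimes>\<^bsub>G\<^esub> snd (snd m))),
      mg_idn = (\<lambda>\<phi>. (\<phi>, \<phi>, \<one>\<^bsub>G\<^esub>)),
      mg_tno = (\<lambda>\<phi> \<psi>. compose (carrier G) \<phi> \<psi>),
      mg_tnm = (\<lambda>m m'. (compose (carrier G) (fst m) (fst m'),
                        compose (carrier G) (fst (snd m)) (fst (snd m')),
                        snd (snd m) \<otimes>\<^bsub>G\<^esub> fst m (snd (snd m')))),
      mg_unt = restrict id (carrier G),
      mg_asc = (\<lambda>x y z. let w = compose (carrier G) x (compose (carrier G) y z) in (w, w, \<one>\<^bsub>G\<^esub>)),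
      mg_lun = (\<lambda>x. (x, x, \<one>\<^bsub>G\<^esub>)),
      mg_run = (\<lambda>x. (x, x, \<one>\<^bsub>G\<^esub>)) \<rparr>)"

text \<open>(i, b) represents r^i s^b with 0 <= i < n; (i,b)(j,c) = (i + (-1)^b j mod n, b xor c).\<close>

definition dihedral :: "nat \<Rightarrow> (int \<times> bool) monoid" where
  "dihedral n =
    \<lparr> carrier = {0..<int n} \<times> UNIV,
      mult = (\<lambda>(i, b) (j, c). ((i + (if b then - j else j)) mod int n, b \<noteq> c)),
      one = (0, False) \<rparr>"

end

theory Submission
  imports Defs
begin


lemma dih_carrier: "carrier (dihedral n) = {0..<int n} \<times> UNIV"
  by (simp add: dihedral_def)
lemma dih_one: "\<one>\<^bsub>dihedral n\<^esub> = (0, False)"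
  by (simp add: dihedral_def)
lemma dih_mult: "(i, b) \<otimes>\<^bsub>dihedral n\<^esub> (j, c) = ((i + (if b then - j else j)) mod int n, b \<noteq> c)"
  by (simp add: dihedral_def)

lemma dih_group: assumes "n > 0" shows "group (dihedral n)"
proof (rule groupI)
  fix x y assume "x \<in> carrier (dihedral n)" "y \<in> carrier (dihedral n)"
  then show "x \<otimes>\<^bsub>dihedral n\<^esub> y \<in> carrier (dihedral n)" using assms
    by (cases x; cases y) (simp add: dih_carrier dih_mult)
next
  show "\<one>\<^bsub>dihedral n\<^esub> \<in> carrier (dihedral n)" using assms by (simp add: dih_carrier dih_one)
next
  fix x y z assume "x \<in> carrier (dihedral n)" "y \<in> carrier (dihedral n)" "z \<in> carrier (dihedral n)"
  then show "x \<otimes>\<^bsub>dihedral n\<^esub> y \<otimes>\<^bsub>dihedral n\<^esub> z = x \<otimes>\<^bsub>dihedral n\<^esub> (y \<otimes>\<^bsub>dihedral n\<^esub> z)"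
    apply (cases x; cases y; cases z)
    apply (auto simp add: dih_mult mod_simps algebra_simps)
    done
next
  fix x assume "x \<in> carrier (dihedral n)"
  then show "\<one>\<^bsub>dihedral n\<^esub> \<otimes>\<^bsub>dihedral n\<^esub> x = x"
    by (cases x) (simp add: dih_carrier dih_mult dih_one)
next
  fix x assume x: "x \<in> carrier (dihedral n)"
  obtain i b where xb: "x = (i, b)" by (cases x)
  show "\<exists>y\<in>carrier (dihedral n). y \<otimes>\<^bsub>dihedral n\<^esub> x = \<one>\<^bsub>dihedral n\<^esub>"
  proof (cases b)
    case True
    then show ?thesis using x xb by (intro bexI[of _ "(i, True)"]) (auto simp: dih_carrier dih_mult dih_one)
  next
    case False
    then show ?thesis using x xb assms by (intro bexI[of _ "((- i) mod int n, False)"]) (auto simp: dih_carrier dih_mult dih_one mod_simps)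
  qed
qed

lemma mod_mult_add_l: "((a::int) * (b mod c) + d) mod c = (a * b + d) mod c"
  by (metis mod_add_left_eq mod_mult_right_eq)
lemma mod_mult_add_r: "(d + (a::int) * (b mod c)) mod c = (d + a * b) mod c"
  by (metis mod_add_right_eq mod_mult_right_eq)

definition phi :: "nat \<Rightarrow> int \<times> bool \<Rightarrow> int \<times> bool" where
  "phi k = restrict (\<lambda>(i, b). (((4 * int k + 1) * i + (if b then 1 else 0)) mod int (8 * k), b))
              (carrier (dihedral (8 * k)))"

lemma phi_in: "x \<in> carrier (dihedral (8*k)) \<Longrightarrow> k \<ge> 1 \<Longrightarrow> phi k x \<in> carrier (dihedral (8*k))"
  by (cases x) (auto simp: phi_def dih_carrier)

lemma phi_hom: assumes "k \<ge> 1" shows "phi k \<in> hom (dihedral (8*k)) (dihedral (8*k))"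
proof (rule homI)
  fix x assume "x \<in> carrier (dihedral (8*k))" then show "phi k x \<in> carrier (dihedral (8*k))"
    using phi_in assms by blast
next
  fix x y assume x: "x \<in> carrier (dihedral (8*k))" and y: "y \<in> carrier (dihedral (8*k))"
  obtain i b j c where xy: "x = (i,b)" "y = (j,c)" by (cases x, cases y)
  have xy': "x \<otimes>\<^bsub>dihedral (8*k)\<^esub> y \<in> carrier (dihedral (8*k))"
    using x y dih_group[of "8*k"] assms by (simp add: group.is_monoid monoid.m_closed)
  show "phi k (x \<otimes>\<^bsub>dihedral (8*k)\<^esub> y) = phi k x \<otimes>\<^bsub>dihedral (8*k)\<^esub> phi k y"
    using x y xy' unfolding xy
    apply (cases b; cases c) apply (auto simp: phi_def dih_mult dih_carrier mod_simps mod_mult_add_l mod_mult_add_r)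
    apply (simp_all add: algebra_simps)
    done
qed


lemma phi_inj: assumes "k \<ge> 1" shows "inj_on (phi k) (carrier (dihedral (8*k)))"
proof (rule inj_onI)
  fix x y assume x: "x \<in> carrier (dihedral (8*k))" and y: "y \<in> carrier (dihedral (8*k))"
    and e: "phi k x = phi k y"
  obtain i b j c where xy: "x = (i,b)" "y = (j,c)" by (cases x, cases y)
  define m where "m = int (8*k)"
  define K where "K = int k"
  have mK: "m = 8 * K" by (simp add: m_def K_def)
  have bc: "b = c" and ee: "((4*K+1)*i + (if b then 1 else 0)) mod m = ((4*K+1)*j + (if b then 1 else 0)) mod m"
    using e x y unfolding xy by (auto simp: phi_def dih_carrier m_def K_def)
  have "m dvd ((4*K+1)*i + (if b then 1 else 0)) - ((4*K+1)*j + (if b then 1 else 0))"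
    using ee by (simp add: mod_eq_dvd_iff)
  hence "m dvd (4*K+1)*(i - j)" by (simp add: algebra_simps)
  hence "m dvd (4*K+1)*((4*K+1)*(i - j))" by simp
  moreover have "(4*K+1)*((4*K+1)*(i - j)) = m * ((2*K+1)*(i-j)) + (i - j)"
    by (simp add: mK algebra_simps)
  ultimately have "m dvd (i - j)" by (metis dvd_add_right_iff dvd_triv_left)
  hence "i mod m = j mod m" by (simp add: mod_eq_dvd_iff)
  moreover have "i mod m = i" "j mod m = j" using x y unfolding xy by (auto simp: dih_carrier m_def)
  ultimately show "x = y" using bc xy by simp
qed

lemma dih_finite: "finite (carrier (dihedral n))"
  by (simp add: dih_carrier)

definition Ob :: "nat \<Rightarrow> ((int \<times> bool) \<Rightarrow> (int \<times> bool)) set" where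
  "Ob n = {\<phi>. \<phi> \<in> iso (dihedral n) (dihedral n) \<and> \<phi> \<in> extensional (carrier (dihedral n))}"

lemma phi_Ob: assumes "k \<ge> 1" shows "phi k \<in> Ob (8*k)"
proof -
  have "phi k ` carrier (dihedral (8*k)) = carrier (dihedral (8*k))"
    by (rule endo_inj_surj[OF dih_finite]) (use phi_in phi_inj assms in auto)
  then show ?thesis using phi_inj[OF assms] phi_hom[OF assms]
    by (auto simp: Ob_def iso_def bij_betw_def phi_def)
qed

lemma Ob_compose: assumes "n > 0" "f \<in> Ob n" "g \<in> Ob n" shows "compose (carrier (dihedral n)) f g \<in> Ob n"
proof -
  interpret group "dihedral n" using dih_group assms by blast
  show ?thesis using assms
    by (auto simp: Ob_def iso_def hom_compose bij_betw_compose)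
qed

lemma Id_Ob: assumes "n > 0" shows "restrict id (carrier (dihedral n)) \<in> Ob n"
proof -
  interpret group "dihedral n" using dih_group assms by blast
  show ?thesis by (auto simp: Ob_def iso_def hom_def bij_betw_def inj_on_def)
qed

lemma Ob_carrier: "f \<in> Ob n \<Longrightarrow> x \<in> carrier (dihedral n) \<Longrightarrow> f x \<in> carrier (dihedral n)"
  by (auto simp: Ob_def iso_def hom_def)

lemma Ob_one: "n > 0 \<Longrightarrow> f \<in> Ob n \<Longrightarrow> f \<one>\<^bsub>dihedral n\<^esub> = \<one>\<^bsub>dihedral n\<^esub>"
  using hom_one[of f "dihedral n" "dihedral n"] dih_group by (auto simp: Ob_def iso_def)

lemma compose_Id_l: "f \<in> Ob n \<Longrightarrow> compose (carrier (dihedral n)) (restrict id (carrier (dihedral n))) f = f"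
  by (rule ext) (auto simp: compose_def Ob_carrier Ob_def extensional_def)
lemma compose_Id_r: "f \<in> Ob n \<Longrightarrow> compose (carrier (dihedral n)) f (restrict id (carrier (dihedral n))) = f"
  by (rule ext) (auto simp: compose_def Ob_carrier Ob_def extensional_def)


lemma central_cases:
  assumes k: "k \<ge> 1" and w: "w \<in> carrier (dihedral (8*k))"
    and c: "\<forall>x\<in>carrier (dihedral (8*k)). w \<otimes>\<^bsub>dihedral (8*k)\<^esub> x = x \<otimes>\<^bsub>dihedral (8*k)\<^esub> w"
  shows "w = (0, False) \<or> w = (4 * int k, False)"
proof -
  obtain i b where wb: "w = (i, b)" by (cases w)
  define m where "m = int (8*k)"
  have m8: "m \<ge> 8" using k by (simp add: m_def)
  have r: "(1, False) \<in> carrier (dihedral (8*k))" "(0, True) \<in> carrier (dihedral (8*k))"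
    using k by (auto simp: dih_carrier)
  have i: "0 \<le> i" "i < m" using w wb by (auto simp: dih_carrier m_def)
  have b: "\<not> b"
  proof
    assume b: b
    have "w \<otimes>\<^bsub>dihedral (8*k)\<^esub> (1, False) = (1, False) \<otimes>\<^bsub>dihedral (8*k)\<^esub> w" using c r by blast
    hence "(i - 1) mod m = (1 + i) mod m" using b wb by (simp add: dih_mult m_def)
    hence "m dvd (i - 1) - (1 + i)" by (simp add: mod_eq_dvd_iff)
    moreover have "(i - 1) - (1 + i) = - 2" by simp
    ultimately have "m dvd 2" by (metis dvd_minus_iff)
    hence "m \<le> 2" by (simp add: zdvd_imp_le)
    thus False using m8 by simp
  qed
  have "w \<otimes>\<^bsub>dihedral (8*k)\<^esub> (0, True) = (0, True) \<otimes>\<^bsub>dihedral (8*k)\<^esub> w" using c r by blast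
  hence "i mod m = (- i) mod m" using b wb by (simp add: dih_mult m_def)
  hence d: "m dvd 2 * i" by (simp add: mod_eq_dvd_iff)
  have "i = 0 \<or> 2 * i = m"
  proof (rule ccontr)
    assume h: "\<not> (i = 0 \<or> 2 * i = m)"
    show False
    proof (cases "2 * i < m")
      case True
      then show False using h d i zdvd_imp_le[of m "2*i"] by simp
    next
      case False
      hence "m dvd 2 * i - m" using d by simp
      moreover have "0 < 2 * i - m" "2 * i - m < m" using False h i by auto
      ultimately show False using zdvd_imp_le[of m "2*i - m"] by simp
    qed
  qed
  thus ?thesis using b wb by (auto simp: m_def)
qed

lemma central_fixed:
  assumes k: "k \<ge> 1" and psi: "\<psi> \<in> Ob (8*k)" and w: "w \<in> carrier (dihedral (8*k))"
    and c: "\<forall>x\<in>carrier (dihedral (8*k)). w \<otimes>\<^bsub>dihedral (8*k)\<^esub> x = x \<otimes>\<^bsub>dihedral (8*k)\<^esub> w"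
  shows "\<psi> w = w"
proof -
  let ?D = "dihedral (8*k)"
  have grp: "group ?D" using dih_group k by simp
  have hom: "\<psi> \<in> hom ?D ?D" and bij: "bij_betw \<psi> (carrier ?D) (carrier ?D)"
    using psi by (auto simp: Ob_def iso_def)
  have one: "\<psi> (0, False) = (0, False)" using Ob_one[OF _ psi] k by (simp add: dih_one)
  have cases: "w = (0, False) \<or> w = (4 * int k, False)" using central_cases[OF k w c] .
  show ?thesis
  proof (cases "w = (0, False)")
    case True then show ?thesis using one by simp
  next
    case False
    hence w4: "w = (4 * int k, False)" using cases by simp
    have pw: "\<psi> w \<in> carrier ?D" using Ob_carrier[OF psi w] .
    have pc: "\<forall>y\<in>carrier ?D. \<psi> w \<otimes>\<^bsub>?D\<^esub> y = y \<otimes>\<^bsub>?D\<^esub> \<psi> w"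
    proof
      fix y assume y: "y \<in> carrier ?D"
      have "y \<in> \<psi> ` carrier ?D" using bij y by (simp add: bij_betw_def)
      then obtain x where x: "x \<in> carrier ?D" "y = \<psi> x" by blast
      have "\<psi> w \<otimes>\<^bsub>?D\<^esub> \<psi> x = \<psi> (w \<otimes>\<^bsub>?D\<^esub> x)" using hom_mult[OF hom w x(1)] by simp
      also have "\<dots> = \<psi> (x \<otimes>\<^bsub>?D\<^esub> w)" using c x by simp
      also have "\<dots> = \<psi> x \<otimes>\<^bsub>?D\<^esub> \<psi> w" using hom_mult[OF hom x(1) w] by simp
      finally show "\<psi> w \<otimes>\<^bsub>?D\<^esub> y = y \<otimes>\<^bsub>?D\<^esub> \<psi> w" using x by simp
    qed
    have "\<psi> w \<noteq> (0, False)"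
    proof
      assume "\<psi> w = (0, False)"
      moreover have "(0, False) \<in> carrier ?D" using k by (simp add: dih_carrier)
      ultimately have "w = (0, False)" using one bij w by (auto simp: bij_betw_def inj_on_def)
      thus False using False by simp
    qed
    thus ?thesis using central_cases[OF k pw pc] w4 by simp
  qed
qed

lemma z_central: assumes "k \<ge> 1"
  shows "(4 * int k, False) \<in> carrier (dihedral (8*k))"
    "\<forall>x\<in>carrier (dihedral (8*k)). (4 * int k, False) \<otimes>\<^bsub>dihedral (8*k)\<^esub> x = x \<otimes>\<^bsub>dihedral (8*k)\<^esub> (4 * int k, False)"
proof -
  show "(4 * int k, False) \<in> carrier (dihedral (8*k))" using assms by (simp add: dih_carrier)
  show "\<forall>x\<in>carrier (dihedral (8*k)). (4 * int k, False) \<otimes>\<^bsub>dihedral (8*k)\<^esub> x = x \<otimes>\<^bsub>dihedral (8*k)\<^esub> (4 * int k, False)"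
  proof
    fix x assume "x \<in> carrier (dihedral (8*k))"
    obtain i b where xb: "x = (i,b)" by (cases x)
    have "(4 * int k + i) mod int (8*k) = (i + (if b then - (4 * int k) else 4 * int k)) mod int (8*k)"
    proof (cases b)
      case True
      have "int (8*k) dvd (4 * int k + i) - (i - 4 * int k)" by simp
      then show ?thesis using True by (simp add: mod_eq_dvd_iff)
    qed (simp add: algebra_simps)
    then show "(4 * int k, False) \<otimes>\<^bsub>dihedral (8*k)\<^esub> x = x \<otimes>\<^bsub>dihedral (8*k)\<^esub> (4 * int k, False)"
      by (simp add: xb dih_mult)
  qed
qed




lemma h_facts: assumes k: "k \<ge> 1"
  shows "(6 * int k - 1, False) \<in> carrier (dihedral (8*k))"
    "phi k (6 * int k - 1, False) = (2 * int k - 1, False)"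
    "(6 * int k - 1, False) \<otimes>\<^bsub>dihedral (8*k)\<^esub> (4 * int k, False) = (2 * int k - 1, False)"
proof -
  show "(6 * int k - 1, False) \<in> carrier (dihedral (8*k))" using k by (simp add: dih_carrier)
  have "((4 * int k + 1) * (6 * int k - 1)) mod int (8*k) = (2 * int k - 1 + (8 * int k) * (3 * int k)) mod (8 * int k)"
    by (simp add: algebra_simps)
  also have "\<dots> = 2 * int k - 1" by (subst mod_mult_self2) (use k in simp)
  finally show "phi k (6 * int k - 1, False) = (2 * int k - 1, False)"
    using k by (simp add: phi_def dih_carrier)
  have "(6 * int k - 1 + 4 * int k) mod int (8*k) = (2 * int k - 1 + (8 * int k) * 1) mod (8 * int k)"
    by (simp add: algebra_simps)
  also have "\<dots> = 2 * int k - 1" by (subst mod_mult_self2) (use k in simp)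
  finally show "(6 * int k - 1, False) \<otimes>\<^bsub>dihedral (8*k)\<^esub> (4 * int k, False) = (2 * int k - 1, False)"
    by (simp add: dih_mult)
qed




lemma mm: "((x::int) + (b * (y mod m) + e)) mod m = (x + (b * y + e)) mod m"
proof -
  have "(x + (b * (y mod m) + e)) mod m = (x + (b * (y mod m) + e) mod m) mod m" by (simp add: mod_add_right_eq)
  also have "\<dots> = (x + (b * y + e) mod m) mod m" by (simp add: mod_mult_add_l)
  also have "\<dots> = (x + (b * y + e)) mod m" by (simp add: mod_add_right_eq)
  finally show ?thesis .
qed

lemma phi_eq: "(i, b) \<in> carrier (dihedral (8*k)) \<Longrightarrow> phi k (i, b) = (((4 * int k + 1) * i + (if b then 1 else 0)) mod (8 * int k), b)"
  by (simp add: phi_def)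

lemma alpha_fact: assumes k: "k \<ge> 1" and x: "x \<in> carrier (dihedral (8*k))"
  shows "(6 * int k - 1, False) \<otimes>\<^bsub>dihedral (8*k)\<^esub> phi k (phi k x) = x \<otimes>\<^bsub>dihedral (8*k)\<^esub> (6 * int k - 1, False)"
proof -
  obtain i b where xb: "x = (i,b)" by (cases x)
  define K where "K = int k"
  define e where "e = (if b then 1 else (0::int))"
  have m: "int (8*k) = 8 * K" by (simp add: K_def)
  have px: "phi k x = (((4*K+1)*i + e) mod (8*K), b)"
    using x phi_eq[of i b k] by (simp add: xb K_def e_def)
  have pxc: "phi k x \<in> carrier (dihedral (8*k))" using phi_in x k by blast
  have pxc': "(((4*K+1)*i + e) mod (8*K), b) \<in> carrier (dihedral (8*k))"
    using pxc px by simp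
  have ppx: "phi k (phi k x) = (((4*K+1)*(((4*K+1)*i + e) mod (8*K)) + e) mod (8*K), b)"
    using pxc' phi_eq[of "((4*K+1)*i + e) mod (8*K)" b k] unfolding px K_def e_def by simp
  have "(6 * K - 1 + ((4*K+1)*(((4*K+1)*i + e) mod (8*K)) + e)) mod (8*K)
        = (6 * K - 1 + ((4*K+1)*((4*K+1)*i + e) + e)) mod (8*K)"
    by (rule mm)
  also have "\<dots> = (i + (if b then - (6 * K - 1) else 6 * K - 1)) mod (8*K)"
  proof (cases b)
    case True
    have "(6 * K - 1 + ((4*K+1)*((4*K+1)*i + e) + e)) - (i + - (6 * K - 1)) = (8*K) * ((2*K+1)*i + 2)"
      using True by (simp add: algebra_simps e_def)
    then show ?thesis using True by (simp add: mod_eq_dvd_iff)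
  next
    case False
    have "(6 * K - 1 + ((4*K+1)*((4*K+1)*i + e) + e)) - (i + (6 * K - 1)) = (8*K) * ((2*K+1)*i)"
      using False by (simp add: algebra_simps e_def)
    then show ?thesis using False by (simp add: mod_eq_dvd_iff)
  qed
  finally have eq: "(6 * K - 1 + ((4*K+1)*(((4*K+1)*i + e) mod (8*K)) + e)) mod (8*K) = (i + (if b then - (6 * K - 1) else 6 * K - 1)) mod (8*K)" .
  have l: "(6 * int k - 1, False) \<otimes>\<^bsub>dihedral (8*k)\<^esub> phi k (phi k x) = ((6 * K - 1 + ((4*K+1)*(((4*K+1)*i + e) mod (8*K)) + e)) mod (8*K), b)"
    by (simp add: ppx dih_mult m K_def[symmetric] mod_add_right_eq)
  have r: "x \<otimes>\<^bsub>dihedral (8*k)\<^esub> (6 * int k - 1, False) = ((i + (if b then - (6 * K - 1) else 6 * K - 1)) mod (8*K), b)"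
    by (simp add: xb dih_mult m K_def[symmetric])
  show ?thesis using l r eq by simp
qed


lemma Sym_simps:
  "mg_obj (Sym G) = {\<phi>. \<phi> \<in> iso G G \<and> \<phi> \<in> extensional (carrier G)}"
  "mg_mor (Sym G) = {(\<phi>, \<psi>, g). \<phi> \<in> mg_obj (Sym G) \<and> \<psi> \<in> mg_obj (Sym G) \<and> g \<in> carrier G \<and>
                   (\<forall>x\<in>carrier G. g \<otimes>\<^bsub>G\<^esub> \<phi> x = \<psi> x \<otimes>\<^bsub>G\<^esub> g)}"
  "mg_dom (Sym G) = fst" "mg_cod (Sym G) = (\<lambda>m. fst (snd m))"
  "mg_cmp (Sym G) = (\<lambda>m' m. (fst m, fst (snd m'), snd (snd m') \<otimes>\<^bsub>G\<^esub> snd (snd m)))"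
  "mg_idn (Sym G) = (\<lambda>\<phi>. (\<phi>, \<phi>, \<one>\<^bsub>G\<^esub>))"
  "mg_tno (Sym G) = (\<lambda>\<phi> \<psi>. compose (carrier G) \<phi> \<psi>)"
  "mg_tnm (Sym G) = (\<lambda>m m'. (compose (carrier G) (fst m) (fst m'),
                        compose (carrier G) (fst (snd m)) (fst (snd m')),
                        snd (snd m) \<otimes>\<^bsub>G\<^esub> fst m (snd (snd m'))))"
  "mg_unt (Sym G) = restrict id (carrier G)"
  "mg_asc (Sym G) = (\<lambda>x y z. let w = compose (carrier G) x (compose (carrier G) y z) in (w, w, \<one>\<^bsub>G\<^esub>))"
  "mg_lun (Sym G) = (\<lambda>x. (x, x, \<one>\<^bsub>G\<^esub>))"
  "mg_run (Sym G) = (\<lambda>x. (x, x, \<one>\<^bsub>G\<^esub>))"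
  by (simp_all add: Sym_def Let_def)

lemma Sym_obj: "mg_obj (Sym (dihedral n)) = Ob n"
  by (simp add: Sym_simps Ob_def)

lemma Sym_mor: "m \<in> mg_mor (Sym (dihedral n)) \<longleftrightarrow> fst m \<in> Ob n \<and> fst (snd m) \<in> Ob n \<and> snd (snd m) \<in> carrier (dihedral n) \<and>
   (\<forall>x\<in>carrier (dihedral n). snd (snd m) \<otimes>\<^bsub>dihedral n\<^esub> fst m x = fst (snd m) x \<otimes>\<^bsub>dihedral n\<^esub> snd (snd m))"
  by (cases m) (auto simp: Sym_simps(2) Sym_obj)

lemma elem_simps:
  "mg_obj (elementary H A act) = carrier H"
  "mg_mor (elementary H A act) = carrier A \<times> carrier H"
  "mg_dom (elementary H A act) = snd" "mg_cod (elementary H A act) = snd"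
  "mg_cmp (elementary H A act) = (\<lambda>m' m. (fst m' \<otimes>\<^bsub>A\<^esub> fst m, snd m))"
  "mg_idn (elementary H A act) = (\<lambda>g. (\<one>\<^bsub>A\<^esub>, g))"
  "mg_tno (elementary H A act) = (\<lambda>g g'. g \<otimes>\<^bsub>H\<^esub> g')"
  "mg_tnm (elementary H A act) = (\<lambda>m m'. (fst m \<otimes>\<^bsub>A\<^esub> act (snd m) (fst m'), snd m \<otimes>\<^bsub>H\<^esub> snd m'))"
  "mg_unt (elementary H A act) = \<one>\<^bsub>H\<^esub>"
  "mg_asc (elementary H A act) = (\<lambda>x y z. (\<one>\<^bsub>A\<^esub>, x \<otimes>\<^bsub>H\<^esub> y \<otimes>\<^bsub>H\<^esub> z))"
  "mg_lun (elementary H A act) = (\<lambda>x. (\<one>\<^bsub>A\<^esub>, x))"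
  "mg_run (elementary H A act) = (\<lambda>x. (\<one>\<^bsub>A\<^esub>, x))"
  by (simp_all add: elementary_def)




lemma mf_fun: "monoidal_functor S T Fo Fm mu eps \<Longrightarrow> mg_functor S T Fo Fm"
  unfolding monoidal_functor_def by blast
lemma mf_mu: "monoidal_functor S T Fo Fm mu eps \<Longrightarrow> x \<in> mg_obj S \<Longrightarrow> y \<in> mg_obj S \<Longrightarrow>
   mg_arr T (mu x y) (mg_tno T (Fo x) (Fo y)) (Fo (mg_tno S x y))"
  unfolding monoidal_functor_def by blast
lemma mf_eps: "monoidal_functor S T Fo Fm mu eps \<Longrightarrow> mg_arr T eps (mg_unt T) (Fo (mg_unt S))"
  unfolding monoidal_functor_def by blast
lemma mf_nat: "monoidal_functor S T Fo Fm mu eps \<Longrightarrow> f \<in> mg_mor S \<Longrightarrow> g \<in> mg_mor S \<Longrightarrow>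
        mg_cmp T (mu (mg_cod S f) (mg_cod S g)) (mg_tnm T (Fm f) (Fm g)) =
        mg_cmp T (Fm (mg_tnm S f g)) (mu (mg_dom S f) (mg_dom S g))"
  unfolding monoidal_functor_def by blast
lemma mf_asc: "monoidal_functor S T Fo Fm mu eps \<Longrightarrow> x \<in> mg_obj S \<Longrightarrow> y \<in> mg_obj S \<Longrightarrow> z \<in> mg_obj S \<Longrightarrow>
        mg_cmp T (Fm (mg_asc S x y z))
          (mg_cmp T (mu (mg_tno S x y) z) (mg_tnm T (mu x y) (mg_idn T (Fo z)))) =
        mg_cmp T (mu x (mg_tno S y z))
          (mg_cmp T (mg_tnm T (mg_idn T (Fo x)) (mu y z)) (mg_asc T (Fo x) (Fo y) (Fo z)))"
  unfolding monoidal_functor_def by blast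
lemma mf_lun: "monoidal_functor S T Fo Fm mu eps \<Longrightarrow> x \<in> mg_obj S \<Longrightarrow>
        mg_cmp T (Fm (mg_lun S x)) (mg_cmp T (mu (mg_unt S) x) (mg_tnm T eps (mg_idn T (Fo x))))
          = mg_lun T (Fo x)"
  unfolding monoidal_functor_def by blast
lemma mf_run: "monoidal_functor S T Fo Fm mu eps \<Longrightarrow> x \<in> mg_obj S \<Longrightarrow>
        mg_cmp T (Fm (mg_run S x)) (mg_cmp T (mu x (mg_unt S)) (mg_tnm T (mg_idn T (Fo x)) eps))
          = mg_run T (Fo x)"
  unfolding monoidal_functor_def by blast

lemma fun_obj: "mg_functor S T Fo Fm \<Longrightarrow> x \<in> mg_obj S \<Longrightarrow> Fo x \<in> mg_obj T"
  unfolding mg_functor_def by blast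
lemma fun_arr: "mg_functor S T Fo Fm \<Longrightarrow> f \<in> mg_mor S \<Longrightarrow> mg_arr T (Fm f) (Fo (mg_dom S f)) (Fo (mg_cod S f))"
  unfolding mg_functor_def by blast
lemma fun_idn: "mg_functor S T Fo Fm \<Longrightarrow> x \<in> mg_obj S \<Longrightarrow> Fm (mg_idn S x) = mg_idn T (Fo x)"
  unfolding mg_functor_def by blast
lemma fun_cmp: "mg_functor S T Fo Fm \<Longrightarrow> f \<in> mg_mor S \<Longrightarrow> g \<in> mg_mor S \<Longrightarrow> mg_dom S g = mg_cod S f \<Longrightarrow>
     Fm (mg_cmp S g f) = mg_cmp T (Fm g) (Fm f)"
  unfolding mg_functor_def by blast

lemma ni_arr: "monoidal_nat_iso S T Fo Fm muF epsF Go Gm muG epsG \<theta> \<Longrightarrow> x \<in> mg_obj S \<Longrightarrow> mg_arr T (\<theta> x) (Fo x) (Go x)"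
  unfolding monoidal_nat_iso_def by blast
lemma ni_nat: "monoidal_nat_iso S T Fo Fm muF epsF Go Gm muG epsG \<theta> \<Longrightarrow> f \<in> mg_mor S \<Longrightarrow>
    mg_cmp T (\<theta> (mg_cod S f)) (Fm f) = mg_cmp T (Gm f) (\<theta> (mg_dom S f))"
  unfolding monoidal_nat_iso_def by blast




lemma main:
  fixes H :: "'h monoid" and A :: "'a monoid"
  assumes k: "k \<ge> 1" and sp: "split_2group (Sym (dihedral (8*k))) H A act"
  shows False
proof -
  let ?D = "dihedral (8*k)"
  let ?T = "Sym ?D"
  let ?S = "elementary H A act"
  have lm: "left_module H A act" and eqv: "mg_equivalent ?S ?T" using sp by (auto simp: split_2group_def)
  from eqv obtain Fo Fm mu eps Go Gm nu eta \<theta> \<theta>' where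
    MF: "monoidal_functor ?S ?T Fo Fm mu eps" and MG: "monoidal_functor ?T ?S Go Gm nu eta" and
    NI: "monoidal_nat_iso ?S ?S
          (Go \<circ> Fo) (Gm \<circ> Fm) (\<lambda>x y. mg_cmp ?S (Gm (mu x y)) (nu (Fo x) (Fo y))) (mg_cmp ?S (Gm eps) eta)
          id id (\<lambda>x y. mg_idn ?S (mg_tno ?S x y)) (mg_idn ?S (mg_unt ?S)) \<theta>" and
    NI': "monoidal_nat_iso ?T ?T
          (Fo \<circ> Go) (Fm \<circ> Gm) (\<lambda>x y. mg_cmp ?T (Fm (nu x y)) (mu (Go x) (Go y))) (mg_cmp ?T (Fm eta) eps)
          id id (\<lambda>x y. mg_idn ?T (mg_tno ?T x y)) (mg_idn ?T (mg_unt ?T)) \<theta>'"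
    unfolding mg_equivalent_def by (elim exE conjE)
  interpret A: comm_group A using lm by (simp add: left_module_def)
  interpret H: group H using lm by (simp add: left_module_def)
  interpret D: group ?D using dih_group k by simp
  have act_hom: "\<And>g. g \<in> carrier H \<Longrightarrow> act g \<in> hom A A" using lm by (simp add: left_module_def)
  have act_one: "\<And>g. g \<in> carrier H \<Longrightarrow> act g \<one>\<^bsub>A\<^esub> = \<one>\<^bsub>A\<^esub>"
    by (rule hom_one[OF act_hom A.is_group A.is_group])
  have act_cl: "\<And>g a. g \<in> carrier H \<Longrightarrow> a \<in> carrier A \<Longrightarrow> act g a \<in> carrier A"
    by (rule hom_in_carrier[OF act_hom])
  have act_1: "\<And>a. a \<in> carrier A \<Longrightarrow> act \<one>\<^bsub>H\<^esub> a = a" using lm by (simp add: left_module_def)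
  have FF: "mg_functor ?S ?T Fo Fm" using mf_fun[OF MF] .
  have GF: "mg_functor ?T ?S Go Gm" using mf_fun[OF MG] .
  have Fo_ob: "\<And>y. y \<in> carrier H \<Longrightarrow> Fo y \<in> Ob (8*k)"
    using fun_obj[OF FF] by (simp add: elem_simps Sym_obj)
  have F_arr: "\<And>f. f \<in> carrier A \<times> carrier H \<Longrightarrow> Fm f \<in> mg_mor ?T \<and> fst (Fm f) = Fo (snd f) \<and> fst (snd (Fm f)) = Fo (snd f)"
    using fun_arr[OF FF] by (simp add: elem_simps mg_arr_def Sym_simps(3,4))
  have F_idn: "\<And>y. y \<in> carrier H \<Longrightarrow> Fm (\<one>\<^bsub>A\<^esub>, y) = (Fo y, Fo y, \<one>\<^bsub>?D\<^esub>)"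
    using fun_idn[OF FF] by (simp add: elem_simps Sym_simps(6))
  have F_mu: "\<And>x y. x \<in> carrier H \<Longrightarrow> y \<in> carrier H \<Longrightarrow> mu x y \<in> mg_mor ?T"
    using mf_mu[OF MF] by (simp add: mg_arr_def elem_simps)
  have F_nat: "\<And>f g. f \<in> carrier A \<times> carrier H \<Longrightarrow> g \<in> carrier A \<times> carrier H \<Longrightarrow>
        mg_cmp ?T (mu (snd f) (snd g)) (mg_tnm ?T (Fm f) (Fm g)) =
        mg_cmp ?T (Fm (mg_tnm ?S f g)) (mu (snd f) (snd g))"
    using mf_nat[OF MF] unfolding elem_simps by blast
  have Go_ob: "\<And>y. y \<in> Ob (8*k) \<Longrightarrow> Go y \<in> carrier H"
    using fun_obj[OF GF] by (simp add: elem_simps Sym_obj)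
  have G_arr: "\<And>f. f \<in> mg_mor ?T \<Longrightarrow> Gm f \<in> carrier A \<times> carrier H \<and> snd (Gm f) = Go (fst f) \<and> snd (Gm f) = Go (fst (snd f))"
  proof -
    fix f assume f: "f \<in> mg_mor ?T"
    have "mg_arr ?S (Gm f) (Go (mg_dom ?T f)) (Go (mg_cod ?T f))" using fun_arr[OF GF f] .
    then show "Gm f \<in> carrier A \<times> carrier H \<and> snd (Gm f) = Go (fst f) \<and> snd (Gm f) = Go (fst (snd f))"
      unfolding mg_arr_def elem_simps Sym_simps(3,4) by assumption
  qed
  have G_idn: "\<And>y. y \<in> Ob (8*k) \<Longrightarrow> Gm (y, y, \<one>\<^bsub>?D\<^esub>) = (\<one>\<^bsub>A\<^esub>, Go y)"
    using fun_idn[OF GF] by (simp add: elem_simps Sym_simps(6) Sym_obj)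
  have G_cmp: "\<And>f g. f \<in> mg_mor ?T \<Longrightarrow> g \<in> mg_mor ?T \<Longrightarrow> fst g = fst (snd f) \<Longrightarrow>
       Gm (mg_cmp ?T g f) = mg_cmp ?S (Gm g) (Gm f)"
    using fun_cmp[OF GF] unfolding Sym_simps(3,4) by blast
  have G_nu: "\<And>x y. x \<in> Ob (8*k) \<Longrightarrow> y \<in> Ob (8*k) \<Longrightarrow> nu x y \<in> carrier A \<times> carrier H"
    using mf_mu[OF MG] by (simp add: mg_arr_def elem_simps Sym_obj)
  have G_eta: "eta \<in> carrier A \<times> carrier H"
    using mf_eps[OF MG] by (simp add: mg_arr_def elem_simps)
  have G_nat: "\<And>f g. f \<in> mg_mor ?T \<Longrightarrow> g \<in> mg_mor ?T \<Longrightarrow>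
        mg_cmp ?S (nu (fst (snd f)) (fst (snd g))) (mg_tnm ?S (Gm f) (Gm g)) =
        mg_cmp ?S (Gm (mg_tnm ?T f g)) (nu (fst f) (fst g))"
    using mf_nat[OF MG] unfolding Sym_simps(3,4) by blast
  have G_asc: "\<And>x y z. x \<in> Ob (8*k) \<Longrightarrow> y \<in> Ob (8*k) \<Longrightarrow> z \<in> Ob (8*k) \<Longrightarrow>
        mg_cmp ?S (Gm (mg_asc ?T x y z))
          (mg_cmp ?S (nu (mg_tno ?T x y) z) (mg_tnm ?S (nu x y) (mg_idn ?S (Go z)))) =
        mg_cmp ?S (nu x (mg_tno ?T y z))
          (mg_cmp ?S (mg_tnm ?S (mg_idn ?S (Go x)) (nu y z)) (mg_asc ?S (Go x) (Go y) (Go z)))"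
    using mf_asc[OF MG] unfolding Sym_obj by blast
  have G_lun: "\<And>x. x \<in> Ob (8*k) \<Longrightarrow>
        mg_cmp ?S (Gm (mg_lun ?T x)) (mg_cmp ?S (nu (mg_unt ?T) x) (mg_tnm ?S eta (mg_idn ?S (Go x))))
          = mg_lun ?S (Go x)"
    using mf_lun[OF MG] unfolding Sym_obj by blast
  have G_run: "\<And>x. x \<in> Ob (8*k) \<Longrightarrow>
        mg_cmp ?S (Gm (mg_run ?T x)) (mg_cmp ?S (nu x (mg_unt ?T)) (mg_tnm ?S (mg_idn ?S (Go x)) eta))
          = mg_run ?S (Go x)"
    using mf_run[OF MG] unfolding Sym_obj by blast
  have F_faith: "\<And>c c' y. c \<in> carrier A \<Longrightarrow> c' \<in> carrier A \<Longrightarrow> y \<in> carrier H \<Longrightarrow> Fm (c, y) = Fm (c', y) \<Longrightarrow> c = c'"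
  proof -
    fix c c' y assume c: "c \<in> carrier A" and c': "c' \<in> carrier A" and y: "y \<in> carrier H" and e: "Fm (c, y) = Fm (c', y)"
    have "mg_arr ?S (\<theta> y) ((Go \<circ> Fo) y) (id y)" using ni_arr[OF NI] y unfolding elem_simps by blast
    hence th: "\<theta> y \<in> carrier A \<times> carrier H" unfolding mg_arr_def elem_simps by blast
    have nat: "\<And>f. f \<in> carrier A \<times> carrier H \<Longrightarrow> fst (\<theta> (snd f)) \<otimes>\<^bsub>A\<^esub> fst (Gm (Fm f)) = fst f \<otimes>\<^bsub>A\<^esub> fst (\<theta> (snd f))"
    proof -
      fix f assume f: "f \<in> carrier A \<times> carrier H"
      have "mg_cmp ?S (\<theta> (mg_cod ?S f)) ((Gm \<circ> Fm) f) = mg_cmp ?S (id f) (\<theta> (mg_dom ?S f))"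
        using ni_nat[OF NI] f unfolding elem_simps(2) by blast
      then show "fst (\<theta> (snd f)) \<otimes>\<^bsub>A\<^esub> fst (Gm (Fm f)) = fst f \<otimes>\<^bsub>A\<^esub> fst (\<theta> (snd f))"
        by (simp add: elem_simps)
    qed
    have "c \<otimes>\<^bsub>A\<^esub> fst (\<theta> y) = c' \<otimes>\<^bsub>A\<^esub> fst (\<theta> y)"
      using nat[of "(c,y)"] nat[of "(c',y)"] c c' y e by simp
    then show "c = c'" using th c c' by (simp add: A.right_cancel mem_Times_iff)
  qed
  have triv: "\<And>y c. y \<in> carrier H \<Longrightarrow> c \<in> carrier A \<Longrightarrow> act y c = c"
  proof -
    fix y c assume y: "y \<in> carrier H" and c: "c \<in> carrier A"
    let ?u = "\<one>\<^bsub>H\<^esub>"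
    have f1: "(c, ?u) \<in> carrier A \<times> carrier H" using c by simp
    have f2: "(\<one>\<^bsub>A\<^esub>, y) \<in> carrier A \<times> carrier H" using y by simp
    define w where "w = snd (snd (Fm (c, ?u)))"
    have Fm1: "Fm (c, ?u) = (Fo ?u, Fo ?u, w)" using F_arr[OF f1] w_def by (simp add: prod_eq_iff)
    have Fm1m: "Fm (c, ?u) \<in> mg_mor ?T" using F_arr[OF f1] by simp
    have w: "w \<in> carrier ?D" and w\<sigma>: "\<forall>x\<in>carrier ?D. w \<otimes>\<^bsub>?D\<^esub> Fo ?u x = Fo ?u x \<otimes>\<^bsub>?D\<^esub> w"
      using Fm1m unfolding Sym_mor Fm1 by auto
    have \<sigma>ob: "Fo ?u \<in> Ob (8*k)" using Fo_ob by simp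
    have surj: "Fo ?u ` carrier ?D = carrier ?D" using \<sigma>ob by (simp add: Ob_def iso_def bij_betw_def)
    have wc: "\<forall>x\<in>carrier ?D. w \<otimes>\<^bsub>?D\<^esub> x = x \<otimes>\<^bsub>?D\<^esub> w"
    proof
      fix x assume "x \<in> carrier ?D"
      then have "x \<in> Fo ?u ` carrier ?D" using surj by simp
      then obtain x' where "x' \<in> carrier ?D" "x = Fo ?u x'" by blast
      then show "w \<otimes>\<^bsub>?D\<^esub> x = x \<otimes>\<^bsub>?D\<^esub> w" using w\<sigma> by simp
    qed
    have \<psi>fix: "Fo y w = w" using central_fixed[OF k Fo_ob[OF y] w wc] .
    have \<sigma>one: "Fo ?u \<one>\<^bsub>?D\<^esub> = \<one>\<^bsub>?D\<^esub>" using Ob_one[OF _ \<sigma>ob] k by simp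
    have m1: "snd (snd (mu ?u y)) \<in> carrier ?D" using F_mu[of ?u y] y unfolding Sym_mor by auto
    have m2: "snd (snd (mu y ?u)) \<in> carrier ?D" using F_mu[of y ?u] y unfolding Sym_mor by auto
    have X1: "snd (snd (Fm (c, y))) \<in> carrier ?D" using F_arr[of "(c,y)"] c y unfolding Sym_mor by auto
    have X2: "snd (snd (Fm (act y c, y))) \<in> carrier ?D" using F_arr[of "(act y c,y)"] act_cl[OF y c] y unfolding Sym_mor by auto
    have tn1: "mg_tnm ?S (c, ?u) (\<one>\<^bsub>A\<^esub>, y) = (c, y)" using c y act_one[of ?u] by (simp add: elem_simps)
    have tn2: "mg_tnm ?S (\<one>\<^bsub>A\<^esub>, y) (c, ?u) = (act y c, y)" using c y act_cl[OF y c] by (simp add: elem_simps)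
    have e1: "snd (snd (mu ?u y)) \<otimes>\<^bsub>?D\<^esub> (w \<otimes>\<^bsub>?D\<^esub> Fo ?u \<one>\<^bsub>?D\<^esub>) = snd (snd (Fm (c, y))) \<otimes>\<^bsub>?D\<^esub> snd (snd (mu ?u y))"
      using F_nat[OF f1 f2] unfolding tn1 Fm1 F_idn[OF y] by (simp add: Sym_simps(5,8))
    have e2: "snd (snd (mu y ?u)) \<otimes>\<^bsub>?D\<^esub> (\<one>\<^bsub>?D\<^esub> \<otimes>\<^bsub>?D\<^esub> Fo y w) = snd (snd (Fm (act y c, y))) \<otimes>\<^bsub>?D\<^esub> snd (snd (mu y ?u))"
      using F_nat[OF f2 f1] unfolding tn2 Fm1 F_idn[OF y] by (simp add: Sym_simps(5,8))
    have "snd (snd (Fm (c, y))) \<otimes>\<^bsub>?D\<^esub> snd (snd (mu ?u y)) = w \<otimes>\<^bsub>?D\<^esub> snd (snd (mu ?u y))"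
      using e1 w m1 wc \<sigma>one by simp
    hence t1: "snd (snd (Fm (c, y))) = w" using D.right_cancel[OF m1 X1 w] by simp
    have "snd (snd (Fm (act y c, y))) \<otimes>\<^bsub>?D\<^esub> snd (snd (mu y ?u)) = w \<otimes>\<^bsub>?D\<^esub> snd (snd (mu y ?u))"
      using e2 w m2 wc \<psi>fix by simp
    hence t2: "snd (snd (Fm (act y c, y))) = w" using D.right_cancel[OF m2 X2 w] by simp
    have "Fm (c, y) = Fm (act y c, y)"
      using F_arr[of "(c,y)"] F_arr[of "(act y c,y)"] c y act_cl[OF y c] t1 t2 by (simp add: prod_eq_iff)
    then show "act y c = c" using F_faith[of c "act y c" y] c y act_cl[OF y c] by simp
  qed
  let ?C = "carrier ?D"
  have k0: "8 * k > 0" using k by simp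
  define \<phi> where "\<phi> = phi k"
  define \<phi>2 where "\<phi>2 = compose ?C \<phi> \<phi>"
  define \<phi>3 where "\<phi>3 = compose ?C \<phi> \<phi>2"
  define I where "I = restrict id ?C"
  define h where "h = (6 * int k - 1, False)"
  define z where "z = (4 * int k, False)"
  have \<phi>ob: "\<phi> \<in> Ob (8*k)" using phi_Ob[OF k] \<phi>_def by simp
  have \<phi>2ob: "\<phi>2 \<in> Ob (8*k)" using Ob_compose[OF k0 \<phi>ob \<phi>ob] \<phi>2_def by simp
  have \<phi>3ob: "\<phi>3 \<in> Ob (8*k)" using Ob_compose[OF k0 \<phi>ob \<phi>2ob] \<phi>3_def by simp
  have Iob: "I \<in> Ob (8*k)" using Id_Ob[OF k0] I_def by simp
  have \<phi>Pi: "\<phi> \<in> ?C \<rightarrow> ?C" using Ob_carrier[OF \<phi>ob] by blast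
  have cIl: "compose ?C I \<phi> = \<phi>" using compose_Id_l[OF \<phi>ob] I_def by simp
  have cIr: "compose ?C \<phi> I = \<phi>" using compose_Id_r[OF \<phi>ob] I_def by simp
  have c21: "compose ?C \<phi>2 \<phi> = \<phi>3" unfolding \<phi>3_def \<phi>2_def using compose_assoc[OF \<phi>Pi, of \<phi> \<phi>] by simp
  have \<phi>3x: "\<And>x. x \<in> ?C \<Longrightarrow> \<phi>3 x = \<phi> (\<phi> (\<phi> x))" unfolding \<phi>3_def \<phi>2_def
    using \<phi>Pi by (auto simp: compose_eq)
  have \<phi>2x: "\<And>x. x \<in> ?C \<Longrightarrow> \<phi>2 x = \<phi> (\<phi> x)" unfolding \<phi>2_def by (simp add: compose_eq)
  have hC: "h \<in> ?C" using h_facts(1)[OF k] h_def by simp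
  have zC: "z \<in> ?C" and zc: "\<forall>x\<in>?C. z \<otimes>\<^bsub>?D\<^esub> x = x \<otimes>\<^bsub>?D\<^esub> z" using z_central[OF k] z_def by auto
  have \<phi>h: "\<phi> h = h \<otimes>\<^bsub>?D\<^esub> z" using h_facts(2,3)[OF k] h_def z_def \<phi>_def by simp
  have z1: "z \<noteq> \<one>\<^bsub>?D\<^esub>" using k by (simp add: z_def dih_one)
  define \<alpha> where "\<alpha> = (\<phi>2, I, h)"
  define i\<phi> where "i\<phi> = (\<phi>, \<phi>, \<one>\<^bsub>?D\<^esub>)"
  define \<zeta> where "\<zeta> = (\<phi>3, \<phi>3, z)"
  define aid where "aid = (\<phi>3, \<phi>, h)"
  define ida where "ida = (\<phi>3, \<phi>, \<phi> h)"
  have \<alpha>m: "\<alpha> \<in> mg_mor ?T" unfolding Sym_mor \<alpha>_def using \<phi>2ob Iob hC alpha_fact[OF k] \<phi>2x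
    by (simp add: I_def h_def \<phi>_def)
  have i\<phi>m: "i\<phi> \<in> mg_mor ?T" unfolding Sym_mor i\<phi>_def using \<phi>ob Ob_carrier[OF \<phi>ob] by simp
  have \<zeta>m: "\<zeta> \<in> mg_mor ?T" unfolding Sym_mor \<zeta>_def using \<phi>3ob Ob_carrier[OF \<phi>3ob] zC zc by simp
  have aidm: "aid \<in> mg_mor ?T" unfolding Sym_mor aid_def using \<phi>3ob \<phi>ob hC alpha_fact[OF k] \<phi>3x Ob_carrier[OF \<phi>ob]
    by (simp add: h_def \<phi>_def)
  have \<phi>2one: "\<phi>2 \<one>\<^bsub>?D\<^esub> = \<one>\<^bsub>?D\<^esub>" using Ob_one[OF k0 \<phi>2ob] .
  have tnm1: "mg_tnm ?T \<alpha> i\<phi> = aid" unfolding Sym_simps(8) \<alpha>_def i\<phi>_def aid_def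
    using c21 cIl \<phi>2one hC by simp
  have c\<phi>2: "compose ?C \<phi> \<phi>2 = \<phi>3" by (simp add: \<phi>3_def)
  have tnm2: "mg_tnm ?T i\<phi> \<alpha> = ida" unfolding Sym_simps(8) \<alpha>_def i\<phi>_def ida_def
    using c\<phi>2 cIr Ob_carrier[OF \<phi>ob hC] by simp
  have cmp6: "mg_cmp ?T aid \<zeta> = ida" unfolding Sym_simps(5) aid_def \<zeta>_def ida_def using \<phi>h by simp
  have xH: "Go \<phi> \<in> carrier H" using Go_ob[OF \<phi>ob] .
  have Gi\<phi>: "Gm i\<phi> = (\<one>\<^bsub>A\<^esub>, Go \<phi>)" using G_idn[OF \<phi>ob] i\<phi>_def by simp
  have Ga: "fst (Gm \<alpha>) \<in> carrier A" "snd (Gm \<alpha>) \<in> carrier H" using G_arr[OF \<alpha>m] by auto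
  have P: "fst (Gm aid) \<in> carrier A" using G_arr[OF aidm] by auto
  have Z: "fst (Gm \<zeta>) \<in> carrier A" using G_arr[OF \<zeta>m] by auto
  have N: "fst (nu \<phi> \<phi>) \<in> carrier A" "snd (nu \<phi> \<phi>) \<in> carrier H" using G_nu[OF \<phi>ob \<phi>ob] by auto
  have n1: "fst (nu \<phi>2 \<phi>) \<in> carrier A" using G_nu[OF \<phi>2ob \<phi>ob] by auto
  have n2: "fst (nu \<phi> \<phi>2) \<in> carrier A" using G_nu[OF \<phi>ob \<phi>2ob] by auto
  have nL: "fst (nu I \<phi>) \<in> carrier A" using G_nu[OF Iob \<phi>ob] by auto
  have nR: "fst (nu \<phi> I) \<in> carrier A" using G_nu[OF \<phi>ob Iob] by auto
  have eA: "fst eta \<in> carrier A" "snd eta \<in> carrier H" using G_eta by auto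
  have e1: "fst (nu I \<phi>) \<otimes>\<^bsub>A\<^esub> (fst (Gm \<alpha>) \<otimes>\<^bsub>A\<^esub> act (snd (Gm \<alpha>)) \<one>\<^bsub>A\<^esub>) = fst (Gm aid) \<otimes>\<^bsub>A\<^esub> fst (nu \<phi>2 \<phi>)"
    using arg_cong[where f=fst, OF G_nat[OF \<alpha>m i\<phi>m]] unfolding tnm1 Gi\<phi>
    by (simp add: elem_simps \<alpha>_def i\<phi>_def)
  have e2: "fst (nu \<phi> I) \<otimes>\<^bsub>A\<^esub> (\<one>\<^bsub>A\<^esub> \<otimes>\<^bsub>A\<^esub> act (Go \<phi>) (fst (Gm \<alpha>))) = fst (Gm ida) \<otimes>\<^bsub>A\<^esub> fst (nu \<phi> \<phi>2)"
    using arg_cong[where f=fst, OF G_nat[OF i\<phi>m \<alpha>m]] unfolding tnm2 Gi\<phi>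
    by (simp add: elem_simps \<alpha>_def i\<phi>_def)
  have asc: "mg_asc ?T \<phi> \<phi> \<phi> = (\<phi>3, \<phi>3, \<one>\<^bsub>?D\<^esub>)" by (simp add: Sym_simps(10) Let_def \<phi>3_def \<phi>2_def)
  have e3: "\<one>\<^bsub>A\<^esub> \<otimes>\<^bsub>A\<^esub> (fst (nu \<phi>2 \<phi>) \<otimes>\<^bsub>A\<^esub> (fst (nu \<phi> \<phi>) \<otimes>\<^bsub>A\<^esub> act (snd (nu \<phi> \<phi>)) \<one>\<^bsub>A\<^esub>))
      = fst (nu \<phi> \<phi>2) \<otimes>\<^bsub>A\<^esub> ((\<one>\<^bsub>A\<^esub> \<otimes>\<^bsub>A\<^esub> act (Go \<phi>) (fst (nu \<phi> \<phi>))) \<otimes>\<^bsub>A\<^esub> \<one>\<^bsub>A\<^esub>)"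
    using arg_cong[where f=fst, OF G_asc[OF \<phi>ob \<phi>ob \<phi>ob]] unfolding asc G_idn[OF \<phi>3ob]
    by (simp add: elem_simps Sym_simps(7) \<phi>2_def)
  have e4: "\<one>\<^bsub>A\<^esub> \<otimes>\<^bsub>A\<^esub> (fst (nu I \<phi>) \<otimes>\<^bsub>A\<^esub> (fst eta \<otimes>\<^bsub>A\<^esub> act (snd eta) \<one>\<^bsub>A\<^esub>)) = \<one>\<^bsub>A\<^esub>"
    using arg_cong[where f=fst, OF G_lun[OF \<phi>ob]] unfolding Sym_simps(11) G_idn[OF \<phi>ob]
    by (simp add: elem_simps Sym_simps(9) I_def)
  have e5: "\<one>\<^bsub>A\<^esub> \<otimes>\<^bsub>A\<^esub> (fst (nu \<phi> I) \<otimes>\<^bsub>A\<^esub> (\<one>\<^bsub>A\<^esub> \<otimes>\<^bsub>A\<^esub> act (Go \<phi>) (fst eta))) = \<one>\<^bsub>A\<^esub>"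
    using arg_cong[where f=fst, OF G_run[OF \<phi>ob]] unfolding Sym_simps(12) G_idn[OF \<phi>ob]
    by (simp add: elem_simps Sym_simps(9) I_def)
  have e6: "fst (Gm ida) = fst (Gm aid) \<otimes>\<^bsub>A\<^esub> fst (Gm \<zeta>)"
    using arg_cong[where f=fst, OF G_cmp[OF \<zeta>m aidm]] unfolding cmp6
    by (simp add: elem_simps aid_def \<zeta>_def)
  have Q: "fst (Gm ida) \<in> carrier A" using e6 P Z by simp
  have a1: "act (snd (Gm \<alpha>)) \<one>\<^bsub>A\<^esub> = \<one>\<^bsub>A\<^esub>" using act_one[OF Ga(2)] .
  have a2: "act (snd (nu \<phi> \<phi>)) \<one>\<^bsub>A\<^esub> = \<one>\<^bsub>A\<^esub>" using act_one[OF N(2)] .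
  have a3: "act (snd eta) \<one>\<^bsub>A\<^esub> = \<one>\<^bsub>A\<^esub>" using act_one[OF eA(2)] .
  have "fst (nu \<phi>2 \<phi>) \<otimes>\<^bsub>A\<^esub> fst (nu \<phi> \<phi>) = fst (nu \<phi> \<phi>2) \<otimes>\<^bsub>A\<^esub> fst (nu \<phi> \<phi>)"
    using e3 a2 triv[OF xH N(1)] N n1 n2 by simp
  hence n12: "fst (nu \<phi>2 \<phi>) = fst (nu \<phi> \<phi>2)" using A.right_cancel[OF N(1) n1 n2] by simp
  have "fst (nu I \<phi>) \<otimes>\<^bsub>A\<^esub> fst eta = fst (nu \<phi> I) \<otimes>\<^bsub>A\<^esub> fst eta"
    using e4 e5 a3 triv[OF xH eA(1)] nL nR eA by simp
  hence nLR: "fst (nu I \<phi>) = fst (nu \<phi> I)" using A.right_cancel[OF eA(1) nL nR] by simp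
  have "fst (Gm aid) \<otimes>\<^bsub>A\<^esub> fst (nu \<phi>2 \<phi>) = fst (Gm ida) \<otimes>\<^bsub>A\<^esub> fst (nu \<phi>2 \<phi>)"
    using e1 e2 a1 triv[OF xH Ga(1)] n12 nLR Ga nL nR by simp
  hence PQ: "fst (Gm aid) = fst (Gm ida)" using A.right_cancel[OF n1 P Q] by simp
  have "fst (Gm \<zeta>) \<otimes>\<^bsub>A\<^esub> fst (Gm aid) = \<one>\<^bsub>A\<^esub> \<otimes>\<^bsub>A\<^esub> fst (Gm aid)"
    using e6 PQ P Z by (simp add: A.m_comm)
  hence Z1: "fst (Gm \<zeta>) = \<one>\<^bsub>A\<^esub>" using A.right_cancel[OF P Z A.one_closed] by simp
  have G\<zeta>: "Gm \<zeta> = Gm (\<phi>3, \<phi>3, \<one>\<^bsub>?D\<^esub>)"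
    using G_arr[OF \<zeta>m] Z1 G_idn[OF \<phi>3ob] by (simp add: prod_eq_iff \<zeta>_def)
  have i3m: "(\<phi>3, \<phi>3, \<one>\<^bsub>?D\<^esub>) \<in> mg_mor ?T" unfolding Sym_mor using \<phi>3ob Ob_carrier[OF \<phi>3ob] by simp
  have "mg_arr ?T (\<theta>' \<phi>3) ((Fo \<circ> Go) \<phi>3) (id \<phi>3)" using ni_arr[OF NI'] \<phi>3ob unfolding Sym_obj by blast
  hence "\<theta>' \<phi>3 \<in> mg_mor ?T" unfolding mg_arr_def by blast
  hence tC: "snd (snd (\<theta>' \<phi>3)) \<in> ?C" unfolding Sym_mor by blast
  have natT: "\<And>f. f \<in> mg_mor ?T \<Longrightarrow> fst f = \<phi>3 \<Longrightarrow> fst (snd f) = \<phi>3 \<Longrightarrow>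
      snd (snd (\<theta>' \<phi>3)) \<otimes>\<^bsub>?D\<^esub> snd (snd (Fm (Gm f))) = snd (snd f) \<otimes>\<^bsub>?D\<^esub> snd (snd (\<theta>' \<phi>3))"
  proof -
    fix f assume f: "f \<in> mg_mor ?T" "fst f = \<phi>3" "fst (snd f) = \<phi>3"
    have "mg_cmp ?T (\<theta>' (mg_cod ?T f)) ((Fm \<circ> Gm) f) = mg_cmp ?T (id f) (\<theta>' (mg_dom ?T f))"
      using ni_nat[OF NI'] f(1) by blast
    then show "snd (snd (\<theta>' \<phi>3)) \<otimes>\<^bsub>?D\<^esub> snd (snd (Fm (Gm f))) = snd (snd f) \<otimes>\<^bsub>?D\<^esub> snd (snd (\<theta>' \<phi>3))"
      using f by (simp add: Sym_simps(3,4,5))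
  qed
  have "z \<otimes>\<^bsub>?D\<^esub> snd (snd (\<theta>' \<phi>3)) = \<one>\<^bsub>?D\<^esub> \<otimes>\<^bsub>?D\<^esub> snd (snd (\<theta>' \<phi>3))"
    using natT[OF \<zeta>m] natT[OF i3m] G\<zeta> by (simp add: \<zeta>_def)
  hence "z = \<one>\<^bsub>?D\<^esub>" using D.right_cancel[OF tC zC D.one_closed] by simp
  then show False using z1 by simp
qed


theorem proposition4p24:
  fixes k :: nat
  assumes "k \<ge> 1"
  shows "\<not> (\<exists>(H :: 'h monoid) (A :: 'a monoid) act.
             split_2group (Sym (dihedral (8 * k))) H A act)"
  using main[OF assms] by blast

end
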